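(* Let $a\in\mathbb F^*$ and suppose $x^n-a$ lies in the center of $\mathcal R$ (so that $\mathcal S_a$ is a ring). Then $M^\theta_a(\overline{fg})=M^\theta_a(\overline f)\,M^\theta_a(\overline g)$ for all $f,g\in\mathcal R$. Hence $M^\theta_a$ is a ring isomorphism between $\mathcal S_a$ and the subring $M^\theta_a(\mathcal S_a)$ of $\mathbb F^{n\times n}$.
   Context: $\mathbb F$ is a finite field, $\theta\in\mathrm{Aut}(\mathbb F)$, $\mathcal R=\mathbb F[x;\theta]$ the skew polynomial ring (elements $\sum f_ix^i$ with left coefficients, $xb=\theta(b)x$). Fix $n\in\mathbb N$. $\mathcal S_a=\mathcal R/\mathcal R(x^n-a)$, $\overline f$ the coset of $f$. $\mathfrak v_a:\mathcal S_a\to\mathbb F^n$ is the inverse of $(c_0,\dots,c_{n-1})\mapsto\overline{\sum_{i=0}^{n-1}c_ix^i}$. The map $M^\theta_a:\mathcal S_a\to\mathbb F^{n\times n}$ sends $\overline f$ to the matrix whose row with index $i$ ($0\le i\le n-1$) is $\mathfrak v_a(\overline{x^if})$. *)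

theory Defs
  imports "HOL-Computational_Algebra.Polynomial" "Jordan_Normal_Form.Matrix"
begin

text \<open>Skew polynomial ring F[x;theta]: elements are represented by their
  (left) coefficient sequences, i.e. by values of type 'a poly; only the
  multiplication is twisted: (c x^i)(d x^j) = c theta^i(d) x^(i+j).\<close>

definition field_aut :: "('a::field \<Rightarrow> 'a) \<Rightarrow> bool" where
  "field_aut \<theta> \<longleftrightarrow> bij \<theta> \<and> (\<forall>x y. \<theta> (x + y) = \<theta> x + \<theta> y) \<and> (\<forall>x y. \<theta> (x * y) = \<theta> x * \<theta> y)"

definition skew_mult :: "('a::field \<Rightarrow> 'a) \<Rightarrow> 'a poly \<Rightarrow> 'a poly \<Rightarrow> 'a poly" where
  "skew_mult \<theta> f g = (\<Sum>i\<le>degree f. monom (coeff f i) i * map_poly (\<theta> ^^ i) g)"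

definition xn_minus :: "nat \<Rightarrow> 'a::field \<Rightarrow> 'a poly" where
  "xn_minus n a = monom 1 n - [:a:]"

definition skew_central :: "('a::field \<Rightarrow> 'a) \<Rightarrow> 'a poly \<Rightarrow> bool" where
  "skew_central \<theta> c \<longleftrightarrow> (\<forall>g. skew_mult \<theta> g c = skew_mult \<theta> c g)"

text \<open>Congruence modulo the left ideal R(x^n - a): equal cosets in S_a.\<close>
definition skew_cong :: "('a::field \<Rightarrow> 'a) \<Rightarrow> nat \<Rightarrow> 'a \<Rightarrow> 'a poly \<Rightarrow> 'a poly \<Rightarrow> bool" where
  "skew_cong \<theta> n a f g \<longleftrightarrow> (\<exists>h. f - g = skew_mult \<theta> h (xn_minus n a))"

definition poly_of_vec :: "nat \<Rightarrow> 'a::field vec \<Rightarrow> 'a poly" where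
  "poly_of_vec n c = (\<Sum>i<n. monom (c $ i) i)"

definition vvec :: "('a::field \<Rightarrow> 'a) \<Rightarrow> nat \<Rightarrow> 'a \<Rightarrow> 'a poly \<Rightarrow> 'a vec" where
  "vvec \<theta> n a f = (THE c. c \<in> carrier_vec n \<and> skew_cong \<theta> n a (poly_of_vec n c) f)"

definition Mtheta :: "('a::field \<Rightarrow> 'a) \<Rightarrow> nat \<Rightarrow> 'a \<Rightarrow> 'a poly \<Rightarrow> 'a mat" where
  "Mtheta \<theta> n a f = mat n n (\<lambda>(i, j). vvec \<theta> n a (skew_mult \<theta> (monom 1 i) f) $ j)"

end

theory Submission
  imports Defs
begin

locale aut =
  fixes \<theta> :: "'a::field \<Rightarrow> 'a"
  assumes aut: "field_aut \<theta>"
begin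

lemma th_add: "\<theta> (x + y) = \<theta> x + \<theta> y" and th_mult: "\<theta> (x * y) = \<theta> x * \<theta> y"
  using aut unfolding field_aut_def by auto

lemma th0: "\<theta> 0 = 0"
proof -
  have "\<theta> 0 = \<theta> 0 + \<theta> 0" using th_add[of 0 0] by simp
  then show ?thesis by (metis add_cancel_right_right)
qed

lemma th1: "\<theta> 1 = 1"
proof -
  have "\<theta> 1 \<noteq> 0" using aut th0 unfolding field_aut_def bij_def inj_def
    by (metis one_neq_zero)
  moreover have "\<theta> 1 = \<theta> 1 * \<theta> 1" using th_mult[of 1 1] by simp
  ultimately show ?thesis by (metis mult_cancel_left1)
qed

lemma T_add: "(\<theta>^^i) (x + y) = (\<theta>^^i) x + (\<theta>^^i) y"
  by (induct i) (auto simp: th_add)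
lemma T_mult: "(\<theta>^^i) (x * y) = (\<theta>^^i) x * (\<theta>^^i) y"
  by (induct i) (auto simp: th_mult)
lemma T0[simp]: "(\<theta>^^i) 0 = 0"
  by (induct i) (auto simp: th0)
lemma T1[simp]: "(\<theta>^^i) 1 = 1"
  by (induct i) (auto simp: th1)

lemma coeff_map_T[simp]: "coeff (map_poly (\<theta>^^i) p) n = (\<theta>^^i) (coeff p n)"
  by (rule coeff_map_poly) simp

abbreviation sm (infixl "\<star>" 70) where "f \<star> g \<equiv> skew_mult \<theta> f g"

lemma sm_alt: "degree f \<le> N \<Longrightarrow> f \<star> g = (\<Sum>i\<le>N. monom (coeff f i) i * map_poly (\<theta>^^i) g)"
  unfolding skew_mult_def
  by (rule sum.mono_neutral_left) (auto simp: coeff_eq_0)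

lemma coeff_sm: "coeff (f \<star> g) k = (\<Sum>i\<le>degree f. if k < i then 0 else coeff f i * (\<theta>^^i) (coeff g (k - i)))"
  unfolding skew_mult_def coeff_sum coeff_monom_mult by (rule sum.cong) (simp_all only: coeff_map_T)

lemma sm_add_left: "(f + g) \<star> h = f \<star> h + g \<star> h"
proof -
  let ?N = "max (degree f) (degree g)"
  have "degree (f+g) \<le> ?N" by (simp add: degree_add_le)
  then show ?thesis
    by (simp add: sm_alt[of f ?N] sm_alt[of g ?N] sm_alt[of "f+g" ?N] add_monom[symmetric]
        distrib_right sum.distrib)
qed

lemma map_poly_T_add: "map_poly (\<theta>^^i) (f + g) = map_poly (\<theta>^^i) f + map_poly (\<theta>^^i) g"
  by (rule poly_eqI) (simp add: coeff_map_T T_add)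

lemma sm_add_right: "h \<star> (f + g) = h \<star> f + h \<star> g"
  unfolding skew_mult_def by (simp add: map_poly_T_add distrib_left sum.distrib)

lemma sm_0_left[simp]: "0 \<star> g = 0" unfolding skew_mult_def by simp
lemma sm_0_right[simp]: "g \<star> 0 = 0" unfolding skew_mult_def by simp

lemma sm_sum_left: "(\<Sum>k\<in>A. F k) \<star> g = (\<Sum>k\<in>A. F k \<star> g)"
  by (induct A rule: infinite_finite_induct) (auto simp: sm_add_left)
lemma sm_sum_right: "g \<star> (\<Sum>k\<in>A. F k) = (\<Sum>k\<in>A. g \<star> F k)"
  by (induct A rule: infinite_finite_induct) (auto simp: sm_add_right)

lemma sm_monom_monom[simp]: "monom a i \<star> monom b j = monom (a * (\<theta>^^i) b) (i + j)"
proof (cases "a = 0")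
  case True then show ?thesis by simp
next
  case False
  have "monom a i \<star> monom b j = (\<Sum>k\<le>i. monom (coeff (monom a i) k) k * map_poly (\<theta>^^k) (monom b j))"
    by (rule sm_alt) (simp add: degree_monom_le)
  also have "\<dots> = monom a i * map_poly (\<theta>^^i) (monom b j)"
    by (subst sum.remove[of _ i]) (auto simp: coeff_monom intro!: sum.neutral)
  finally show ?thesis by (simp add: map_poly_monom mult_monom)
qed

lemma T_comb: "(\<theta>^^i) (b * (\<theta>^^j) c) = (\<theta>^^i) b * (\<theta>^^(i+j)) c"
  by (simp add: T_mult funpow_add)

lemma assoc1: "monom a i \<star> (monom b j \<star> h) = (monom a i \<star> monom b j) \<star> h"
proof -
  have "monom a i \<star> (monom b j \<star> (\<Sum>k\<le>degree h. monom (coeff h k) k))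
     = (monom a i \<star> monom b j) \<star> (\<Sum>k\<le>degree h. monom (coeff h k) k)"
    by (simp add: sm_sum_right T_comb mult.assoc add.assoc)
  then show ?thesis by (simp add: poly_as_sum_of_monoms)
qed

lemma assoc2: "monom a i \<star> (g \<star> h) = (monom a i \<star> g) \<star> h"
proof -
  have "monom a i \<star> ((\<Sum>k\<le>degree g. monom (coeff g k) k) \<star> h)
     = (monom a i \<star> (\<Sum>k\<le>degree g. monom (coeff g k) k)) \<star> h"
    by (simp add: sm_sum_right sm_sum_left assoc1 del: sm_monom_monom)
  then show ?thesis by (simp add: poly_as_sum_of_monoms)
qed

lemma sm_assoc: "f \<star> (g \<star> h) = (f \<star> g) \<star> h"
proof -
  have "(\<Sum>k\<le>degree f. monom (coeff f k) k) \<star> (g \<star> h)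
     = ((\<Sum>k\<le>degree f. monom (coeff f k) k) \<star> g) \<star> h"
    by (simp add: sm_sum_left assoc2)
  then show ?thesis by (simp add: poly_as_sum_of_monoms)
qed

lemma sm_1_left[simp]: "1 \<star> g = g"
  unfolding skew_mult_def by simp

lemma sm_1_right[simp]: "g \<star> 1 = g"
  unfolding skew_mult_def by (simp add: poly_as_sum_of_monoms)

lemma sm_const: "[:c:] \<star> g = Polynomial.smult c g"
  unfolding skew_mult_def by (simp add: monom_0)

lemma sm_minus_right: "h \<star> (f - g) = h \<star> f - h \<star> g"
  using sm_add_right[of h "f - g" g] by (simp add: algebra_simps)
lemma sm_minus_left: "(f - g) \<star> h = f \<star> h - g \<star> h"
  using sm_add_left[of "f - g" g h] by (simp add: algebra_simps)


lemma sm_neg_left: "(- f) \<star> h = - (f \<star> h)"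
  using sm_minus_left[of 0 f h] by simp

lemma sm_monom_0_right: "h \<star> monom b 0 = (\<Sum>i\<le>degree h. monom (coeff h i * (\<theta>^^i) b) i)"
proof -
  have "(\<Sum>i\<le>degree h. monom (coeff h i) i) \<star> monom b 0 = (\<Sum>i\<le>degree h. monom (coeff h i * (\<theta>^^i) b) i)"
    by (simp add: sm_sum_left)
  then show ?thesis by (simp add: poly_as_sum_of_monoms)
qed

lemma coeff_sm_monom_0: "coeff (h \<star> monom b 0) k = coeff h k * (\<theta>^^k) b"
  by (auto simp: sm_monom_0_right coeff_sum coeff_monom coeff_eq_0)

lemma sm_monom_1_right: "h \<star> monom 1 n = monom 1 n * h"
proof -
  have "(\<Sum>i\<le>degree h. monom (coeff h i) i) \<star> monom 1 n = monom 1 n * (\<Sum>i\<le>degree h. monom (coeff h i) i)"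
    by (simp add: sm_sum_left sum_distrib_left mult_monom add.commute)
  then show ?thesis by (simp add: poly_as_sum_of_monoms)
qed

end

locale sk = aut \<theta> for \<theta> :: "'a::field \<Rightarrow> 'a" +
  fixes n :: nat and a :: 'a
  assumes npos: "n > 0" and central: "skew_central \<theta> (xn_minus n a)"
begin

abbreviation X where "X \<equiv> xn_minus n a"
abbreviation cg where "cg \<equiv> skew_cong \<theta> n a"
abbreviation P where "P \<equiv> poly_of_vec n"
abbreviation v where "v \<equiv> vvec \<theta> n a"

lemma X_alt: "X = monom 1 n - monom a 0"
  by (simp add: xn_minus_def monom_0)

lemma coeff_X: "coeff (h \<star> X) k = (if n \<le> k then coeff h (k - n) else 0) - coeff h k * (\<theta>^^k) a"
  by (simp add: X_alt sm_minus_right coeff_sm_monom_0 sm_monom_1_right coeff_monom_mult)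

lemma cg_refl: "cg f f"
  unfolding skew_cong_def by (rule exI[of _ 0]) simp

lemma cg_sym: "cg f g \<Longrightarrow> cg g f"
  unfolding skew_cong_def by (metis minus_diff_eq sm_neg_left)

lemma cg_trans: "cg f g \<Longrightarrow> cg g k \<Longrightarrow> cg f k"
  unfolding skew_cong_def
proof (elim exE)
  fix h h' assume "f - g = h \<star> X" "g - k = h' \<star> X"
  then have "f - k = (h + h') \<star> X" by (simp add: sm_add_left algebra_simps)
  then show "\<exists>h. f - k = h \<star> X" ..
qed

lemma cg_add: "cg f g \<Longrightarrow> cg f' g' \<Longrightarrow> cg (f + f') (g + g')"
  unfolding skew_cong_def
proof (elim exE)
  fix h h' assume "f - g = h \<star> X" "f' - g' = h' \<star> X"
  then have "(f + f') - (g + g') = (h + h') \<star> X" by (simp add: sm_add_left algebra_simps)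
  then show "\<exists>h. (f + f') - (g + g') = h \<star> X" ..
qed

lemma cg_sum: "(\<And>k. k \<in> A \<Longrightarrow> cg (F k) (G k)) \<Longrightarrow> cg (\<Sum>k\<in>A. F k) (\<Sum>k\<in>A. G k)"
  by (induct A rule: infinite_finite_induct) (auto simp: cg_refl cg_add)

lemma cg_left: "cg f g \<Longrightarrow> cg (k \<star> f) (k \<star> g)"
  unfolding skew_cong_def
proof (elim exE)
  fix h assume "f - g = h \<star> X"
  then have "k \<star> f - k \<star> g = (k \<star> h) \<star> X" by (simp add: sm_minus_right[symmetric] sm_assoc)
  then show "\<exists>h. k \<star> f - k \<star> g = h \<star> X" ..
qed

lemma cg_right: "cg f g \<Longrightarrow> cg (f \<star> k) (g \<star> k)"
  unfolding skew_cong_def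
proof (elim exE)
  fix h assume "f - g = h \<star> X"
  then have "f \<star> k - g \<star> k = (h \<star> X) \<star> k" by (simp add: sm_minus_left[symmetric])
  also have "\<dots> = h \<star> (k \<star> X)" using central unfolding skew_central_def by (simp add: sm_assoc)
  also have "\<dots> = (h \<star> k) \<star> X" by (simp add: sm_assoc)
  finally show "\<exists>h. f \<star> k - g \<star> k = h \<star> X" ..
qed

lemma coeff_P: "coeff (P c) k = (if k < n then c $ k else 0)"
  unfolding poly_of_vec_def coeff_sum by (simp add: coeff_monom)

lemma uniq: assumes "c \<in> carrier_vec n" "d \<in> carrier_vec n" "cg (P c) f" "cg (P d) f"
  shows "c = d"
proof -
  have "cg (P c) (P d)" using assms cg_sym cg_trans by blast
  then obtain h where h: "P c - P d = h \<star> X" unfolding skew_cong_def by blast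
  have "h = 0"
  proof (rule ccontr)
    assume "h \<noteq> 0"
    have "coeff (P c - P d) (degree h + n) = 0" by (simp add: coeff_P)
    moreover have "coeff (h \<star> X) (degree h + n) = lead_coeff h"
      using npos by (simp add: coeff_X coeff_eq_0)
    ultimately show False using h \<open>h \<noteq> 0\<close> by simp
  qed
  then have "P c = P d" using h by simp
  then have "\<And>i. i < n \<Longrightarrow> c $ i = d $ i" by (metis coeff_P)
  then show ?thesis using assms by (intro eq_vecI) auto
qed

lemma exist: "\<exists>c \<in> carrier_vec n. cg (P c) f"
proof (induct "degree f" arbitrary: f rule: less_induct)
  case less
  show ?case
  proof (cases "degree f < n")
    case True
    have "P (vec n (coeff f)) = f"
      by (rule poly_eqI) (use True in \<open>auto simp: coeff_P coeff_eq_0\<close>)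
    then show ?thesis using cg_refl by (intro bexI[of _ "vec n (coeff f)"]) auto
  next
    case False
    define d where "d = degree f"
    define h0 where "h0 = monom (lead_coeff f) (d - n)"
    define f' where "f' = f - h0 \<star> X"
    have dn: "n \<le> d" using False unfolding d_def by simp
    have "coeff f' k = 0" if kd: "k \<ge> d" for k
    proof -
      have e1: "(d - n = k - n) \<longleftrightarrow> k = d" using kd dn by arith
      have e2: "d - n \<noteq> k" using kd dn npos by arith
      have k1: "coeff h0 k = 0" using e2 by (simp add: h0_def coeff_monom)
      have k2: "coeff h0 (k - n) = (if k = d then lead_coeff f else 0)"
        using e1 by (simp add: h0_def coeff_monom)
      have "coeff (h0 \<star> X) k = (if k = d then lead_coeff f else 0)"
        using kd dn by (simp only: coeff_X k1 k2) simp
      moreover have "coeff f k = (if k = d then lead_coeff f else 0)"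
        using kd unfolding d_def by (auto simp: coeff_eq_0)
      ultimately show ?thesis unfolding f'_def by simp
    qed
    then have "degree f' \<le> d - 1" using False npos by (intro degree_le) auto
    then have "degree f' < degree f" using False npos unfolding d_def by linarith
    then obtain c where c: "c \<in> carrier_vec n" "cg (P c) f'" using less by blast
    have "cg f' f" unfolding skew_cong_def f'_def
      by (rule exI[of _ "- h0"]) (simp add: sm_neg_left)
    then show ?thesis using c cg_trans by blast
  qed
qed

lemma vvec_spec: "v f \<in> carrier_vec n \<and> cg (P (v f)) f"
proof -
  have "\<exists>!c. c \<in> carrier_vec n \<and> cg (P c) f" using exist uniq by blast
  then show ?thesis unfolding vvec_def by (rule theI')
qed

lemma dim_v[simp]: "dim_vec (v f) = n"
  using vvec_spec[of f] by auto

lemma vvec_eq: "c \<in> carrier_vec n \<Longrightarrow> cg (P c) f \<Longrightarrow> v f = c"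
  using vvec_spec uniq by blast

lemma vvec_cong: "cg f g \<Longrightarrow> v f = v g"
  using vvec_spec vvec_eq cg_trans by metis


lemma x0: "monom 1 0 \<star> f = f"
  by (simp add: monom_0 one_pCons[symmetric])

lemma P_add: "c \<in> carrier_vec n \<Longrightarrow> d \<in> carrier_vec n \<Longrightarrow> P (c + d) = P c + P d"
  by (rule poly_eqI) (simp add: coeff_P)

lemma P_unit: "i < n \<Longrightarrow> P (unit_vec n i) = monom 1 i"
  by (rule poly_eqI) (auto simp: coeff_P coeff_monom)

lemma P_lin: "P (vec n (\<lambda>j. \<Sum>k<n. c $ k * w k $ j)) = (\<Sum>k<n. Polynomial.smult (c $ k) (P (w k)))"
  by (rule poly_eqI) (auto simp: coeff_P coeff_sum)

lemma P_sm: "P c \<star> g = (\<Sum>k<n. monom (c $ k) k \<star> g)"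
  unfolding poly_of_vec_def by (rule sm_sum_left)

lemma monom_split: "monom c k \<star> g = [:c:] \<star> (monom 1 k \<star> g)"
proof -
  have "[:c:] \<star> (monom 1 k \<star> g) = ([:c:] \<star> monom 1 k) \<star> g" by (rule sm_assoc)
  moreover have "[:c:] \<star> monom 1 k = monom c k" using sm_monom_monom[of c 0 1 k] by (simp add: monom_0)
  ultimately show ?thesis by simp
qed

lemma row_mult: "v (monom 1 i \<star> (f \<star> g)) = vec n (\<lambda>j. \<Sum>k<n. v (monom 1 i \<star> f) $ k * v (monom 1 k \<star> g) $ j)"
proof -
  define c where "c = v (monom 1 i \<star> f)"
  define w where "w = (\<lambda>k. v (monom 1 k \<star> g))"
  have e1: "P (vec n (\<lambda>j. \<Sum>k<n. c $ k * w k $ j)) = (\<Sum>k<n. [:c $ k:] \<star> P (w k))"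
    by (simp only: P_lin sm_const)
  have wk: "cg (P (w k)) (monom 1 k \<star> g)" for k
    unfolding w_def by (rule conjunct2[OF vvec_spec])
  have e2: "cg (\<Sum>k<n. [:c $ k:] \<star> P (w k)) (\<Sum>k<n. [:c $ k:] \<star> (monom 1 k \<star> g))"
    by (rule cg_sum, rule cg_left, rule wk)
  have e3: "(\<Sum>k<n. [:c $ k:] \<star> (monom 1 k \<star> g)) = P c \<star> g"
    by (simp only: P_sm monom_split[symmetric])
  have e4: "cg (P c \<star> g) ((monom 1 i \<star> f) \<star> g)"
    unfolding c_def by (rule cg_right, rule conjunct2[OF vvec_spec])
  have "cg (P (vec n (\<lambda>j. \<Sum>k<n. c $ k * w k $ j))) ((monom 1 i \<star> f) \<star> g)"
    unfolding e1 using cg_trans[OF e2[unfolded e3] e4] .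
  then have "cg (P (vec n (\<lambda>j. \<Sum>k<n. c $ k * w k $ j))) (monom 1 i \<star> (f \<star> g))"
    by (simp only: sm_assoc)
  then have "v (monom 1 i \<star> (f \<star> g)) = vec n (\<lambda>j. \<Sum>k<n. c $ k * w k $ j)"
    by (intro vvec_eq) auto
  then show ?thesis unfolding c_def w_def .
qed

lemma row_add: "v (h \<star> (f + g)) = v (h \<star> f) + v (h \<star> g)"
proof (rule vvec_eq)
  show "v (h \<star> f) + v (h \<star> g) \<in> carrier_vec n" using vvec_spec[of "h \<star> f"] vvec_spec[of "h \<star> g"] by auto
  have "cg (P (v (h \<star> f)) + P (v (h \<star> g))) (h \<star> f + h \<star> g)"
    by (rule cg_add) (simp_all add: vvec_spec)
  then show "cg (P (v (h \<star> f) + v (h \<star> g))) (h \<star> (f + g))"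
    using vvec_spec[of "h \<star> f"] vvec_spec[of "h \<star> g"] by (simp add: P_add sm_add_right)
qed

lemma row_one: "i < n \<Longrightarrow> v (monom 1 i) = unit_vec n i"
  by (rule vvec_eq) (auto simp: P_unit cg_refl)

end

theorem theorem3p6:
  fixes \<theta> :: "'a::{finite, field} \<Rightarrow> 'a" and n :: nat and a :: 'a
  assumes "field_aut \<theta>" and "n > 0" and "a \<noteq> 0"
    and "skew_central \<theta> (xn_minus n a)"
  shows "(\<forall>f g. Mtheta \<theta> n a (skew_mult \<theta> f g) = Mtheta \<theta> n a f * Mtheta \<theta> n a g)
    \<and> (\<forall>f g. skew_cong \<theta> n a f g \<longrightarrow> Mtheta \<theta> n a f = Mtheta \<theta> n a g)
    \<and> (\<forall>f g. Mtheta \<theta> n a f = Mtheta \<theta> n a g \<longrightarrow> skew_cong \<theta> n a f g)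
    \<and> (\<forall>f g. Mtheta \<theta> n a (f + g) = Mtheta \<theta> n a f + Mtheta \<theta> n a g)
    \<and> Mtheta \<theta> n a 1 = 1\<^sub>m n"
proof -
  interpret sk \<theta> n a
    using assms by unfold_locales (auto simp: aut_def)
  have c1: "Mtheta \<theta> n a (skew_mult \<theta> f g) = Mtheta \<theta> n a f * Mtheta \<theta> n a g" for f g
  proof (rule eq_matI)
    fix i j assume ij: "i < dim_row (Mtheta \<theta> n a f * Mtheta \<theta> n a g)" "j < dim_col (Mtheta \<theta> n a f * Mtheta \<theta> n a g)"
    then have i: "i < n" and j: "j < n" by (auto simp: Mtheta_def)
    have "(Mtheta \<theta> n a f * Mtheta \<theta> n a g) $$ (i, j) = (\<Sum>k<n. v (monom 1 i \<star> f) $ k * v (monom 1 k \<star> g) $ j)"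
      using i j by (simp add: Mtheta_def scalar_prod_def lessThan_atLeast0)
    also have "\<dots> = Mtheta \<theta> n a (f \<star> g) $$ (i, j)"
      using i j by (simp add: Mtheta_def row_mult)
    finally show "Mtheta \<theta> n a (f \<star> g) $$ (i, j) = (Mtheta \<theta> n a f * Mtheta \<theta> n a g) $$ (i, j)" ..
  qed (auto simp: Mtheta_def)
  have c2: "Mtheta \<theta> n a f = Mtheta \<theta> n a g" if "cg f g" for f g
    unfolding Mtheta_def using vvec_cong[OF cg_left[OF that]] by simp
  have c3: "cg f g" if M: "Mtheta \<theta> n a f = Mtheta \<theta> n a g" for f g
  proof -
    have "v f $ j = v g $ j" if "j < n" for j
    proof -
      have "Mtheta \<theta> n a f $$ (0, j) = Mtheta \<theta> n a g $$ (0, j)" using M by simp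
      then show ?thesis using that npos by (simp add: Mtheta_def x0)
    qed
    then have "v f = v g" using vvec_spec[of f] vvec_spec[of g] by (intro eq_vecI) auto
    then show ?thesis using vvec_spec[of f] vvec_spec[of g] by (metis cg_sym cg_trans)
  qed
  have c4: "Mtheta \<theta> n a (f + g) = Mtheta \<theta> n a f + Mtheta \<theta> n a g" for f g
    by (rule eq_matI) (auto simp: Mtheta_def row_add)
  have c5: "Mtheta \<theta> n a 1 = 1\<^sub>m n"
    by (rule eq_matI) (auto simp: Mtheta_def row_one)
  show ?thesis using c1 c2 c3 c4 c5 by blast
qed
end
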